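(* Let $p\ge2$ and $n,\ell,t$ be positive integers with $n\ge\ell$. For integers $w,r\ge0$ let $\xi_r$ be a prime with $\max(t,r)<\xi_r\le2\max(t,r)+1$ and let $\mathbf{a}^*_{r,w}\in\{0,\dots,\xi_r-1\}^t$ maximize $|\mathcal{C}_{2,t,1}(r+w,r,\mathbf{a},\xi_r)|$ over $\mathbf{a}$. Define $$\mathcal{C}^2=\bigcup_{w=0}^{\lfloor n/\ell\rfloor-1}\bigl\{\mathbf{x}\in\mathbb{Z}_p^n:\ \mu(\mathbf{x})\in\mathbb{Z}_p^{n-(w+1)\ell},\ \pi(\mathbf{x})\in\mathcal{C}_{2,t,1}(r+w,r,\mathbf{a}^*_{r,w},\xi_r)\text{ where }r=\mathrm{wt}_H(\mu(\mathbf{x}))\bigr\}.$$ Then $$|\mathcal{C}^2|\ge p^\ell\sum_{w=0}^{\lfloor n/\ell\rfloor-1}\ \sum_{r=0}^{n-(w+1)\ell}\frac{N_{p,\ell}\bigl(n-(w+1)\ell,r\bigr)\binom{r+w}{w}}{(2\max(r,t)+1)^t}.$$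
   Context: $\mathbb{Z}_p=\{0,1,\dots,p-1\}$ with arithmetic mod $p$. For $\mathbf{x}\in\mathbb{Z}_p^n$ let $\mathbf{z}\in\mathbb{Z}_p^{n-\ell}$ with $z_i=x_{i+\ell}-x_i$ ($1\le i\le n-\ell$), and write uniquely $\mathbf{z}=0^{b_1}u_10^{b_2}u_2\cdots u_r0^{b_{r+1}}$ with $u_i\in\mathbb{Z}_p\setminus\{0\}$, $b_i\ge0$. Define the duplication root $\mu(\mathbf{x})=0^{b_1\bmod\ell}u_10^{b_2\bmod\ell}u_2\cdots u_r0^{b_{r+1}\bmod\ell}$ and the binary word $\pi(\mathbf{x})=0^{\lfloor b_1/\ell\rfloor}1\,0^{\lfloor b_2/\ell\rfloor}1\cdots1\,0^{\lfloor b_{r+1}/\ell\rfloor}$ (with $r$ ones). For binary words: any $\mathbf{s}\in\{0,1\}^m$ of Hamming weight $r$ is $\mathbf{s}=0^{c_1}1\,0^{c_2}1\cdots1\,0^{c_{r+1}}$, and for a prime $\xi$ and $\mathbf{a}\in\{0,\dots,\xi-1\}^t$, $$\mathcal{C}_{2,t,1}(m,r,\mathbf{a},\xi)=\Bigl\{\mathbf{s}\in\{0,1\}^m:\ \mathrm{wt}_H(\mathbf{s})=r,\ \sum_{i=1}^{r+1}i^q c_i\equiv a_q\pmod{\xi}\ \forall\,1\le q\le t\Bigr\}.$$ $N_{p,\ell}(m,r)$ denotes the number of words in $\mathbb{Z}_p^m$ of Hamming weight $r$ containing no $\ell$ consecutive zeros. *)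

theory Defs
  imports Complex_Main "HOL-Computational_Algebra.Primes"
begin

definition words :: "nat \<Rightarrow> nat \<Rightarrow> nat list set" where
  "words p m = {y. length y = m \<and> set y \<subseteq> {..<p}}"

definition hwt :: "nat list \<Rightarrow> nat" where
  "hwt y = length (filter (\<lambda>a. a \<noteq> 0) y)"

text \<open>Zero-run lengths: for z = 0^b1 u1 0^b2 ... ur 0^b(r+1) with ui nonzero,
  zruns z = [b1, ..., b(r+1)].\<close>
fun zruns :: "nat list \<Rightarrow> nat list" where
  "zruns [] = [0]"
| "zruns (a # z) = (if a = 0 then (case zruns z of [] \<Rightarrow> [0] | b # bs \<Rightarrow> Suc b # bs)
                    else 0 # zruns z)"

fun interleave :: "nat list \<Rightarrow> nat list \<Rightarrow> nat list" where
  "interleave [] us = []"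
| "interleave (b # bs) [] = replicate b 0"
| "interleave (b # bs) (u # us) = replicate b 0 @ u # interleave bs us"

definition diffword :: "nat \<Rightarrow> nat \<Rightarrow> nat list \<Rightarrow> nat list" where
  "diffword p l x = map (\<lambda>i. (x ! (i + l) + p - x ! i) mod p) [0..<length x - l]"

definition dup_root :: "nat \<Rightarrow> nat \<Rightarrow> nat list \<Rightarrow> nat list" where
  "dup_root p l x = (let z = diffword p l x in
     interleave (map (\<lambda>b. b mod l) (zruns z)) (filter (\<lambda>a. a \<noteq> 0) z))"

definition pi_word :: "nat \<Rightarrow> nat \<Rightarrow> nat list \<Rightarrow> nat list" where
  "pi_word p l x = (let z = diffword p l x in
     interleave (map (\<lambda>b. b div l) (zruns z)) (replicate (hwt z) 1))"

text \<open>The code C_{2,t,1}(m,r,a,xi); a is a list (a_1,...,a_t), a_q = a ! (q-1).\<close>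
definition C21 :: "nat \<Rightarrow> nat \<Rightarrow> nat \<Rightarrow> nat list \<Rightarrow> nat \<Rightarrow> nat list set" where
  "C21 t m r a \<xi> = {s. length s = m \<and> set s \<subseteq> {0,1} \<and> hwt s = r \<and>
     (\<forall>q\<in>{1..t}. (\<Sum>i<length (zruns s). (i + 1) ^ q * zruns s ! i) mod \<xi> = a ! (q - 1) mod \<xi>)}"

definition avecs :: "nat \<Rightarrow> nat \<Rightarrow> nat list set" where
  "avecs t \<xi> = {a. length a = t \<and> set a \<subseteq> {..<\<xi>}}"

definition no_l_zeros :: "nat \<Rightarrow> nat list \<Rightarrow> bool" where
  "no_l_zeros l y = (\<not> (\<exists>i. i + l \<le> length y \<and> (\<forall>j<l. y ! (i + j) = 0)))"

definition Npl :: "nat \<Rightarrow> nat \<Rightarrow> nat \<Rightarrow> nat \<Rightarrow> nat" where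
  "Npl p l m r = card {y \<in> words p m. hwt y = r \<and> no_l_zeros l y}"

definition C2code :: "nat \<Rightarrow> nat \<Rightarrow> nat \<Rightarrow> nat \<Rightarrow> (nat \<Rightarrow> nat) \<Rightarrow> (nat \<Rightarrow> nat \<Rightarrow> nat list) \<Rightarrow> nat list set" where
  "C2code p n l t \<xi> astar = (\<Union>w\<in>{0..<n div l}.
     {x \<in> words p n. length (dup_root p l x) = n - (w + 1) * l \<and>
        (let r = hwt (dup_root p l x) in pi_word p l x \<in> C21 t (r + w) r (astar r w) (\<xi> r))})"

end

theory Submission
  imports Defs
begin


lemma zruns_ne: "zruns z \<noteq> []"
  by (induction z) (auto split: list.split)

lemma interleave_zruns: "interleave (zruns z) (filter (\<lambda>a. a \<noteq> 0) z) = z"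
proof (induction z)
  case Nil thus ?case by simp
next
  case (Cons a z)
  obtain b bs where bb: "zruns z = b # bs" using zruns_ne by (cases "zruns z") auto
  show ?case
  proof (cases "a = 0")
    case True
    then show ?thesis using Cons bb
      by (cases "filter (\<lambda>a. a \<noteq> 0) z") auto
  next
    case False
    then show ?thesis using Cons by simp
  qed
qed

lemma length_zruns: "length (zruns z) = hwt z + 1"
  unfolding hwt_def by (induction z) (auto split: list.split)

lemma zruns_rep: "zruns (replicate k 0 @ v) = (hd (zruns v) + k) # tl (zruns v)"
proof (induction k)
  case 0 then show ?case using zruns_ne by (cases "zruns v") auto
next
  case (Suc k) then show ?case by simp
qed

lemma zruns_interleave:
  "length bs = length us + 1 \<Longrightarrow> \<forall>u\<in>set us. u \<noteq> 0 \<Longrightarrow>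
   zruns (interleave bs us) = bs \<and> filter (\<lambda>a. a \<noteq> 0) (interleave bs us) = us"
proof (induction us arbitrary: bs)
  case Nil
  then obtain b where "bs = [b]" by (cases bs) auto
  then show ?case using zruns_rep[of b "[]"] by simp
next
  case (Cons u us)
  then obtain b bs' where bs: "bs = b # bs'" by (cases bs) auto
  have IH: "zruns (interleave bs' us) = bs' \<and> filter (\<lambda>a. a \<noteq> 0) (interleave bs' us) = us"
    using Cons bs by auto
  have "zruns (u # interleave bs' us) = 0 # bs'" using IH Cons by simp
  then show ?case using bs zruns_rep[of b "u # interleave bs' us"] IH Cons by simp
qed

lemma length_interleave:
  "length bs = length us + 1 \<Longrightarrow> length (interleave bs us) = sum_list bs + length us"
proof (induction us arbitrary: bs)
  case Nil then show ?case by (cases bs) auto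
next
  case (Cons u us) then show ?case by (cases bs) auto
qed

lemma hd_zruns_zero: "(\<forall>j<hd (zruns y). y ! j = 0) \<and> hd (zruns y) \<le> length y"
proof (induction y)
  case Nil then show ?case by simp
next
  case (Cons a y)
  obtain b bs where bb: "zruns y = b # bs" using zruns_ne by (cases "zruns y") auto
  show ?case using Cons bb by (auto simp: nth_Cons split: nat.split)
qed

lemma zruns_run: "b \<in> set (zruns y) \<Longrightarrow> \<exists>i. i + b \<le> length y \<and> (\<forall>j<b. y ! (i + j) = 0)"
proof (induction y arbitrary: b)
  case Nil then show ?case by simp
next
  case (Cons a y)
  obtain c bs where bb: "zruns y = c # bs" using zruns_ne by (cases "zruns y") auto
  show ?case
  proof (cases "b = hd (zruns (a # y))")
    case True
    then show ?thesis using hd_zruns_zero[of "a # y"] by (intro exI[of _ 0]) auto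
  next
    case False
    then have "b \<in> set (zruns y)" using Cons.prems bb by (auto split: if_splits)
    then obtain i where "i + b \<le> length y" "\<forall>j<b. y ! (i + j) = 0" using Cons.IH by blast
    then show ?thesis by (intro exI[of _ "Suc i"]) auto
  qed
qed

lemma no_l_zeros_runs: "no_l_zeros l y \<Longrightarrow> b \<in> set (zruns y) \<Longrightarrow> b < l"
proof (rule ccontr)
  assume a: "no_l_zeros l y" "b \<in> set (zruns y)" "\<not> b < l"
  then obtain i where "i + b \<le> length y" "\<forall>j<b. y ! (i + j) = 0" using zruns_run by blast
  then show False using a unfolding no_l_zeros_def by force
qed

lemma filter_binary: "set s \<subseteq> {0,1} \<Longrightarrow> filter (\<lambda>a. a \<noteq> (0::nat)) s = replicate (hwt s) 1"
  unfolding hwt_def by (induction s) auto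



function xf :: "nat \<Rightarrow> nat \<Rightarrow> nat list \<Rightarrow> nat list \<Rightarrow> nat \<Rightarrow> nat" where
  "xf p l pre z i = (if i < l \<or> l = 0 then pre ! i else (xf p l pre z (i - l) + z ! (i - l)) mod p)"
  by auto
termination by (relation "measure (\<lambda>(p,l,pre,z,i). i)") auto

declare xf.simps[simp del]

lemma mod_diff_aux: "a < (p::nat) \<Longrightarrow> c < p \<Longrightarrow> ((a + c) mod p + p - a) mod p = c"
proof (cases "a + c < p")
  case True
  assume "a < p" "c < p"
  then show ?thesis using True by simp
next
  case False
  assume h: "a < p" "c < p"
  then have "(a + c) mod p = a + c - p" using False
    by (metis add_less_mono le_mod_geq less_diff_conv2 mod_less not_less)
  then show ?thesis using h False by simp
qed

lemma diffword_exists: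
  assumes "pre \<in> words p l" "z \<in> words p (n - l)" "l \<le> n" "0 < l" "0 < p"
  shows "\<exists>x \<in> words p n. take l x = pre \<and> diffword p l x = z"
proof -
  define x where "x = map (xf p l pre z) [0..<n]"
  have lp: "length pre = l" "set pre \<subseteq> {..<p}" using assms(1) by (auto simp: words_def)
  have lz: "length z = n - l" "set z \<subseteq> {..<p}" using assms(2) by (auto simp: words_def)
  have bnd: "xf p l pre z i < p" if "i < n" for i
  proof (cases "i < l")
    case True
    then have "xf p l pre z i = pre ! i" by (simp add: xf.simps)
    moreover have "pre ! i < p" using lp True by (metis lessThan_iff nth_mem subsetD)
    ultimately show ?thesis by simp
  next
    case False then show ?thesis using assms(4,5) by (auto simp: xf.simps[of p l pre z i])
  qed
  have "x \<in> words p n" unfolding words_def x_def using bnd by auto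
  moreover have "take l x = pre"
    using lp assms(3) by (intro nth_equalityI) (auto simp: x_def xf.simps)
  moreover have "diffword p l x = z"
  proof (intro nth_equalityI)
    show "length (diffword p l x) = length z" using lz by (simp add: diffword_def x_def)
    fix i assume "i < length (diffword p l x)"
    then have i: "i < n - l" by (simp add: diffword_def x_def)
    have e1: "x ! (i + l) = (xf p l pre z i + z ! i) mod p"
      using i assms(4) by (simp add: x_def xf.simps[of p l pre z "i + l"])
    have e2: "x ! i = xf p l pre z i" using i by (simp add: x_def)
    have "z ! i \<in> set z" using lz i by (metis nth_mem)
    then have "z ! i < p" using lz by blast
    then show "diffword p l x ! i = z ! i"
      using i e1 e2 bnd[of i] mod_diff_aux by (simp add: diffword_def x_def)
  qed
  ultimately show ?thesis by blast
qed

lemma construct: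
  assumes p: "2 \<le> p" and l: "0 < l" and pre: "pre \<in> words p l"
    and y: "y \<in> words p m" "no_l_zeros l y" and s: "length s = hwt y + w" "set s \<subseteq> {0,1}" "hwt s = hwt y"
    and n: "n = m + (w + 1) * l"
  shows "\<exists>x \<in> words p n. take l x = pre \<and> dup_root p l x = y \<and> pi_word p l x = s"
proof -
  define r where "r = hwt y"
  define c where "c = zruns y"
  define u where "u = filter (\<lambda>a. a \<noteq> 0) y"
  define d where "d = zruns s"
  define cd where "cd = map (\<lambda>(a,b). a + l * b) (zip c d)"
  define z where "z = interleave cd u"
  have lc: "length c = r + 1" unfolding c_def r_def by (simp add: length_zruns)
  have ld: "length d = r + 1" unfolding d_def r_def using s by (simp add: length_zruns)
  have lu: "length u = r" unfolding u_def r_def hwt_def by simp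
  have lcd: "length cd = r + 1" using lc ld by (simp add: cd_def)
  have unz: "\<forall>a\<in>set u. a \<noteq> 0" unfolding u_def by simp
  have zz: "zruns z = cd \<and> filter (\<lambda>a. a \<noteq> 0) z = u"
    unfolding z_def using zruns_interleave[OF _ unz] lcd lu by simp
  have cl: "\<forall>b\<in>set c. b < l" using no_l_zeros_runs y(2) unfolding c_def by blast
  have m1: "map (\<lambda>b. b mod l) cd = c"
  proof -
    have "map (\<lambda>b. b mod l) cd = map fst (zip c d)"
      unfolding cd_def using cl by (auto intro!: map_cong dest!: set_zip_leftD)
    then show ?thesis using lc ld by simp
  qed
  have m2: "map (\<lambda>b. b div l) cd = d"
  proof -
    have "map (\<lambda>b. b div l) cd = map snd (zip c d)"
      unfolding cd_def using cl l by (auto intro!: map_cong dest!: set_zip_leftD)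
    then show ?thesis using lc ld by simp
  qed
  have yi: "y = interleave c u" unfolding c_def u_def using interleave_zruns[of y] by simp
  have ly: "m = sum_list c + r" using y(1) yi lc lu length_interleave[of c u]
    by (simp add: words_def)
  have fs: "filter (\<lambda>a. a \<noteq> 0) s = replicate r 1" using filter_binary[OF s(2)] s(3) r_def by simp
  have si: "s = interleave d (replicate r 1)" using interleave_zruns[of s] fs d_def by simp
  have ls: "r + w = sum_list d + r" using s(1) si ld length_interleave[of d "replicate r 1"] r_def
    by simp
  have "sum_list cd = sum_list (map fst (zip c d)) + l * sum_list (map snd (zip c d))"
    unfolding cd_def by (induction c d rule: list_induct2') (auto simp: algebra_simps)
  then have scd: "sum_list cd = sum_list c + l * sum_list d" using lc ld by simp
  have lz: "length z = n - l" using length_interleave[of cd u] lcd lu scd ly ls n unfolding z_def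
    by (simp add: algebra_simps)
  have "set z \<subseteq> {..<p}"
  proof
    fix a assume "a \<in> set z"
    then have "a = 0 \<or> a \<in> set (filter (\<lambda>a. a \<noteq> 0) z)" by auto
    moreover have "a \<in> set (filter (\<lambda>a. a \<noteq> 0) z) \<Longrightarrow> a \<in> set y"
    proof -
      assume "a \<in> set (filter (\<lambda>a. a \<noteq> 0) z)"
      then have "a \<in> set (filter (\<lambda>a. a \<noteq> 0) y)" using zz unfolding u_def by metis
      then show ?thesis by simp
    qed
    ultimately have "a = 0 \<or> a \<in> set y" by blast
    then show "a \<in> {..<p}" using p y(1) unfolding words_def by auto
  qed
  then have zw: "z \<in> words p (n - l)" using lz by (simp add: words_def)
  obtain x where x: "x \<in> words p n" "take l x = pre" "diffword p l x = z"
    using diffword_exists[OF pre zw _ l] n p by force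
  have hz: "hwt z = r" using zz lu unfolding hwt_def by simp
  have "dup_root p l x = y" unfolding dup_root_def Let_def x(3) using zz m1 yi by simp
  moreover have "pi_word p l x = s" unfolding pi_word_def Let_def x(3) using zz m2 si hz by simp
  ultimately show ?thesis using x by blast
qed



lemma words_alt: "words p m = {xs. set xs \<subseteq> {..<p} \<and> length xs = m}"
  unfolding words_def by auto

lemma finite_words: "finite (words p m)"
  unfolding words_alt by (rule finite_lists_length_eq) simp

lemma card_words: "card (words p m) = p ^ m"
  unfolding words_alt by (subst card_lists_length_eq) auto

lemma finite_C21: "finite (C21 t m r a \<xi>)"
proof -
  have "C21 t m r a \<xi> \<subseteq> {xs. set xs \<subseteq> {0,1} \<and> length xs = m}" unfolding C21_def by auto
  then show ?thesis using finite_lists_length_eq[of "{0::nat,1}" m] finite_subset by blast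
qed

lemma card_binwords: "card {s. length s = m \<and> set s \<subseteq> {0,1} \<and> hwt s = r} = m choose r"
proof -
  define S where "S = {s. length s = m \<and> set s \<subseteq> {0::nat,1} \<and> hwt s = r}"
  define T where "T = {A. A \<subseteq> {0..<m} \<and> card A = r}"
  define f where "f s = {i. i < m \<and> s ! i \<noteq> 0}" for s :: "nat list"
  define g where "g A = map (\<lambda>i. if i \<in> A then 1 else (0::nat)) [0..<m]" for A :: "nat set"
  have hw: "hwt s = card {i. i < length s \<and> s ! i \<noteq> 0}" for s
    unfolding hwt_def by (rule length_filter_conv_card)
  have "bij_betw f S T"
  proof (rule bij_betw_byWitness[where f' = g])
    show "\<forall>s\<in>S. g (f s) = s"
    proof
      fix s assume s: "s \<in> S"
      show "g (f s) = s"
      proof (rule nth_equalityI)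
        show "length (g (f s)) = length s" using s by (simp add: g_def S_def)
        fix i assume "i < length (g (f s))"
        then have i: "i < m" by (simp add: g_def)
        have "s ! i \<in> set s" using s i unfolding S_def by simp
        then have "s ! i \<in> {0,1}" using s unfolding S_def by blast
        then show "g (f s) ! i = s ! i" using i by (auto simp: g_def f_def)
      qed
    qed
    show "\<forall>A\<in>T. f (g A) = A"
    proof
      fix A assume "A \<in> T"
      then have Am: "A \<subseteq> {0..<m}" unfolding T_def by simp
      show "f (g A) = A"
      proof (intro set_eqI iffI)
        fix i assume "i \<in> f (g A)"
        then show "i \<in> A" unfolding f_def g_def by (auto split: if_splits)
      next
        fix i assume "i \<in> A"
        then have "i < m" using Am by auto
        then show "i \<in> f (g A)" using \<open>i \<in> A\<close> unfolding f_def g_def by simp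
      qed
    qed
    show "f ` S \<subseteq> T"
    proof
      fix A assume "A \<in> f ` S"
      then obtain s where s: "s \<in> S" "A = f s" by blast
      have ls: "length s = m" "hwt s = r" using s(1) unfolding S_def by auto
      have "card A = r" using s(2) ls hw[of s] unfolding f_def by simp
      moreover have "A \<subseteq> {0..<m}" using s unfolding f_def by auto
      ultimately show "A \<in> T" unfolding T_def by simp
    qed
    show "g ` T \<subseteq> S"
    proof
      fix s assume "s \<in> g ` T"
      then obtain A where A: "A \<in> T" "s = g A" by blast
      have Am: "A \<subseteq> {0..<m}" using A(1) unfolding T_def by simp
      have "{i. i < length s \<and> s ! i \<noteq> 0} = A"
      proof (intro set_eqI iffI)
        fix i assume "i \<in> {i. i < length s \<and> s ! i \<noteq> 0}"
        then show "i \<in> A" using A(2) unfolding g_def by (auto split: if_splits)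
      next
        fix i assume "i \<in> A"
        then have "i < m" using Am by auto
        then show "i \<in> {i. i < length s \<and> s ! i \<noteq> 0}" using A(2) \<open>i \<in> A\<close> unfolding g_def by simp
      qed
      moreover have "length s = m" "set s \<subseteq> {0,1}" using A(2) by (auto simp: g_def)
      moreover have "card A = r" using A(1) unfolding T_def by simp
      ultimately show "s \<in> S" using hw[of s] unfolding S_def by simp
    qed
  qed
  then have "card S = card T" by (rule bij_betw_same_card)
  also have "card T = m choose r" unfolding T_def using n_subsets[of "{0..<m}" r] by simp
  finally show ?thesis unfolding S_def .
qed

lemma pigeon:
  assumes "0 < \<xi>" "a0 \<in> avecs t \<xi>" "\<And>a. a \<in> avecs t \<xi> \<Longrightarrow> card (C21 t m r a \<xi>) \<le> card (C21 t m r a0 \<xi>)"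
  shows "m choose r \<le> \<xi> ^ t * card (C21 t m r a0 \<xi>)"
proof -
  define B where "B = {s. length s = m \<and> set s \<subseteq> {0::nat,1} \<and> hwt s = r}"
  have fa: "finite (avecs t \<xi>)"
    unfolding avecs_def using finite_lists_length_eq[of "{..<\<xi>}" t] by (simp add: conj_commute)
  have ca: "card (avecs t \<xi>) = \<xi> ^ t"
    unfolding avecs_def using card_lists_length_eq[of "{..<\<xi>}" t] by (simp add: conj_commute)
  have sub: "B \<subseteq> (\<Union>a\<in>avecs t \<xi>. C21 t m r a \<xi>)"
  proof
    fix s assume s: "s \<in> B"
    define F where "F q = (\<Sum>i<length (zruns s). (i + 1) ^ q * zruns s ! i) mod \<xi>" for q
    define a where "a = map (\<lambda>j. F (j + 1)) [0..<t]"
    have "a \<in> avecs t \<xi>" unfolding a_def avecs_def F_def using assms(1) by auto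
    moreover have "s \<in> C21 t m r a \<xi>" using s unfolding C21_def B_def
    proof (intro CollectI conjI ballI)
      fix q assume q: "q \<in> {1..t}"
      then have q1: "q - 1 < t" "Suc (q - 1) = q" by auto
      then have "a ! (q - 1) = F (Suc (q - 1))" unfolding a_def by (simp del: upt_Suc)
      then have "a ! (q - 1) = F q" using q1 by simp
      then show "(\<Sum>i<length (zruns s). (i + 1) ^ q * zruns s ! i) mod \<xi> = a ! (q - 1) mod \<xi>"
        unfolding F_def by simp
    qed auto
    ultimately show "s \<in> (\<Union>a\<in>avecs t \<xi>. C21 t m r a \<xi>)" by blast
  qed
  have "m choose r = card B" unfolding B_def by (rule card_binwords[symmetric])
  also have "\<dots> \<le> card (\<Union>a\<in>avecs t \<xi>. C21 t m r a \<xi>)"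
    using sub fa finite_C21 by (intro card_mono) auto
  also have "\<dots> \<le> (\<Sum>a\<in>avecs t \<xi>. card (C21 t m r a \<xi>))" using fa by (rule card_UN_le)
  also have "\<dots> \<le> card (avecs t \<xi>) * card (C21 t m r a0 \<xi>)"
    using sum_bounded_above[of "avecs t \<xi>" "\<lambda>a. card (C21 t m r a \<xi>)"] assms(3) by simp
  finally show ?thesis using ca by simp
qed



lemma hwt_le: "hwt y \<le> length y"
  unfolding hwt_def by simp

lemma count_w:
  assumes p: "2 \<le> p" and l: "0 < l" and n: "n = m + (w + 1) * l"
  shows "p ^ l * (\<Sum>r=0..m. Npl p l m r * card (C21 t (r + w) r (astar r w) (\<xi> r)))
    \<le> card {x \<in> words p n. length (dup_root p l x) = m \<and>
        (let r = hwt (dup_root p l x) in pi_word p l x \<in> C21 t (r + w) r (astar r w) (\<xi> r))}"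
    (is "?L \<le> card ?S")
proof -
  define Y where "Y r = {y \<in> words p m. hwt y = r \<and> no_l_zeros l y}" for r
  define E where "E = (\<Union>r\<in>{0..m}. Sigma (Y r) (\<lambda>_. C21 t (r + w) r (astar r w) (\<xi> r)))"
  define D where "D = words p l \<times> E"
  define G where "G x = (take l x, dup_root p l x, pi_word p l x)" for x
  have fY: "finite (Y r)" for r unfolding Y_def using finite_words by simp
  have cE: "card E = (\<Sum>r=0..m. Npl p l m r * card (C21 t (r + w) r (astar r w) (\<xi> r)))"
  proof -
    have "card E = (\<Sum>r\<in>{0..m}. card (Sigma (Y r) (\<lambda>_. C21 t (r + w) r (astar r w) (\<xi> r))))"
      unfolding E_def
    proof (rule card_UN_disjoint)
      show "\<forall>i\<in>{0..m}. finite (Sigma (Y i) (\<lambda>_. C21 t (i + w) i (astar i w) (\<xi> i)))"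
        using fY finite_C21 by blast
      show "\<forall>i\<in>{0..m}. \<forall>j\<in>{0..m}. i \<noteq> j \<longrightarrow>
        Sigma (Y i) (\<lambda>_. C21 t (i + w) i (astar i w) (\<xi> i)) \<inter> Sigma (Y j) (\<lambda>_. C21 t (j + w) j (astar j w) (\<xi> j)) = {}"
        unfolding Y_def by blast
    qed simp
    also have "\<dots> = (\<Sum>r=0..m. Npl p l m r * card (C21 t (r + w) r (astar r w) (\<xi> r)))"
      by (intro sum.cong refl) (simp add: card_cartesian_product Npl_def Y_def)
    finally show ?thesis .
  qed
  have cD: "card D = ?L" unfolding D_def by (simp add: card_cartesian_product card_words cE)
  have sub: "D \<subseteq> G ` ?S"
  proof
    fix e assume "e \<in> D"
    then obtain pre y s r where e: "e = (pre, y, s)" "pre \<in> words p l" "r \<in> {0..m}" "y \<in> Y r"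
      "s \<in> C21 t (r + w) r (astar r w) (\<xi> r)"
      unfolding D_def E_def by blast
    have y: "y \<in> words p m" "no_l_zeros l y" "hwt y = r" using e(4) unfolding Y_def by auto
    have s: "length s = hwt y + w" "set s \<subseteq> {0,1}" "hwt s = hwt y" using e(5) y(3)
      unfolding C21_def by auto
    obtain x where x: "x \<in> words p n" "take l x = pre" "dup_root p l x = y" "pi_word p l x = s"
      using construct[OF p l e(2) y(1,2) s n] by blast
    have "length y = m" using y(1) unfolding words_def by simp
    then have "x \<in> ?S" using x e(5) y(3) by (simp add: Let_def)
    then show "e \<in> G ` ?S" using x e(1) unfolding G_def by force
  qed
  have fS: "finite ?S" using finite_words[of p n] by simp
  have "card D \<le> card (G ` ?S)" using sub fS by (intro card_mono) auto
  also have "\<dots> \<le> card ?S" using fS by (rule card_image_le)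
  finally show ?thesis using cD by simp
qed



lemma real_bound:
  assumes "b \<le> \<xi> ^ t * c" "0 < \<xi>" "\<xi> \<le> B"
  shows "real b / real B ^ t \<le> real c"
proof -
  have x0: "0 < real \<xi> ^ t" using assms(2) by simp
  have "real \<xi> ^ t \<le> real B ^ t" using assms(3) by (intro power_mono) auto
  then have "real b / real B ^ t \<le> real b / real \<xi> ^ t"
    using x0 assms(2,3) by (intro divide_left_mono) auto
  also have "\<dots> \<le> real c"
  proof -
    have "real b \<le> real \<xi> ^ t * real c" using assms(1) by (metis of_nat_le_iff of_nat_mult of_nat_power)
    then show ?thesis using x0 by (simp add: divide_le_eq mult.commute)
  qed
  finally show ?thesis .
qed

theorem lemma7:
  fixes p n l t :: nat and \<xi> :: "nat \<Rightarrow> nat" and astar :: "nat \<Rightarrow> nat \<Rightarrow> nat list"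
  assumes "p \<ge> 2" and "n > 0" and "l > 0" and "t > 0" and "n \<ge> l"
    and xi: "\<And>r. prime (\<xi> r) \<and> max t r < \<xi> r \<and> \<xi> r \<le> 2 * max t r + 1"
    and astar_mem: "\<And>r w. astar r w \<in> avecs t (\<xi> r)"
    and astar_max: "\<And>r w a. a \<in> avecs t (\<xi> r) \<Longrightarrow>
        card (C21 t (r + w) r a (\<xi> r)) \<le> card (C21 t (r + w) r (astar r w) (\<xi> r))"
  shows "real (card (C2code p n l t \<xi> astar)) \<ge>
    real p ^ l * (\<Sum>w<n div l. \<Sum>r=0..n - (w + 1) * l.
       real (Npl p l (n - (w + 1) * l) r) * real ((r + w) choose w) / real (2 * max r t + 1) ^ t)"
proof -
  define S where "S w = {x \<in> words p n. length (dup_root p l x) = n - (w + 1) * l \<and>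
        (let r = hwt (dup_root p l x) in pi_word p l x \<in> C21 t (r + w) r (astar r w) (\<xi> r))}" for w
  have wl: "(w + 1) * l \<le> n" if "w < n div l" for w
  proof -
    have "w + 1 \<le> n div l" using that by simp
    then have "(w + 1) * l \<le> n div l * l" by (rule mult_right_mono) simp
    also have "\<dots> \<le> n" by simp
    finally show ?thesis .
  qed
  have C: "C2code p n l t \<xi> astar = (\<Union>w\<in>{..<n div l}. S w)"
    unfolding C2code_def S_def by (simp only: atLeast0LessThan)
  have cC: "card (C2code p n l t \<xi> astar) = (\<Sum>w<n div l. card (S w))"
    unfolding C
  proof (rule card_UN_disjoint)
    show "\<forall>i\<in>{..<n div l}. finite (S i)" unfolding S_def using finite_words by simp
    show "\<forall>i\<in>{..<n div l}. \<forall>j\<in>{..<n div l}. i \<noteq> j \<longrightarrow> S i \<inter> S j = {}"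
    proof (intro ballI impI)
      fix i j assume ij: "i \<in> {..<n div l}" "j \<in> {..<n div l}" "i \<noteq> j"
      have "n - (i + 1) * l \<noteq> n - (j + 1) * l"
      proof
        assume "n - (i + 1) * l = n - (j + 1) * l"
        moreover have "(i + 1) * l \<le> n" "(j + 1) * l \<le> n" using wl[of i] wl[of j] ij by auto
        ultimately have "(i + 1) * l = (j + 1) * l" by linarith
        then have "i * l = j * l" by simp
        then show False using ij assms(3) by simp
      qed
      then show "S i \<inter> S j = {}" unfolding S_def by auto
    qed
  qed simp
  have termb: "real (Npl p l (n - (w + 1) * l) r) * real ((r + w) choose w) / real (2 * max r t + 1) ^ t
      \<le> real (Npl p l (n - (w + 1) * l) r * card (C21 t (r + w) r (astar r w) (\<xi> r)))" for w r
  proof -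
    have "(r + w) choose w = (r + w) choose r" using binomial_symmetric[of w "r + w"] by simp
    then have "(r + w) choose w \<le> \<xi> r ^ t * card (C21 t (r + w) r (astar r w) (\<xi> r))"
      using pigeon[of "\<xi> r" "astar r w" t "r + w" r] astar_mem astar_max xi[of r]
      by (simp add: prime_gt_0_nat)
    then have "real ((r + w) choose w) / real (2 * max r t + 1) ^ t
       \<le> real (card (C21 t (r + w) r (astar r w) (\<xi> r)))"
      using xi[of r] by (intro real_bound) (auto simp: prime_gt_0_nat max.commute)
    then have "real (Npl p l (n - (w + 1) * l) r) * (real ((r + w) choose w) / real (2 * max r t + 1) ^ t)
      \<le> real (Npl p l (n - (w + 1) * l) r) * real (card (C21 t (r + w) r (astar r w) (\<xi> r)))"
      by (rule mult_left_mono) simp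
    then show ?thesis by (simp only: times_divide_eq_right of_nat_mult)
  qed
  have "real p ^ l * (\<Sum>w<n div l. \<Sum>r=0..n - (w + 1) * l.
       real (Npl p l (n - (w + 1) * l) r) * real ((r + w) choose w) / real (2 * max r t + 1) ^ t)
    = (\<Sum>w<n div l. real p ^ l * (\<Sum>r=0..n - (w + 1) * l.
       real (Npl p l (n - (w + 1) * l) r) * real ((r + w) choose w) / real (2 * max r t + 1) ^ t))"
    by (rule sum_distrib_left)
  also have "\<dots> \<le> (\<Sum>w<n div l. real (card (S w)))"
  proof (rule sum_mono)
    fix w assume w: "w \<in> {..<n div l}"
    have n: "n = (n - (w + 1) * l) + (w + 1) * l" using wl[of w] w by simp
    have "real p ^ l * (\<Sum>r=0..n - (w + 1) * l.
       real (Npl p l (n - (w + 1) * l) r) * real ((r + w) choose w) / real (2 * max r t + 1) ^ t)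
      \<le> real p ^ l * (\<Sum>r=0..n - (w + 1) * l.
       real (Npl p l (n - (w + 1) * l) r * card (C21 t (r + w) r (astar r w) (\<xi> r))))"
      by (intro mult_left_mono sum_mono termb) auto
    also have "\<dots> = real (p ^ l * (\<Sum>r=0..n - (w + 1) * l.
       Npl p l (n - (w + 1) * l) r * card (C21 t (r + w) r (astar r w) (\<xi> r))))" by simp
    also have "\<dots> \<le> real (card (S w))"
      unfolding of_nat_le_iff S_def by (rule count_w[OF assms(1,3) n])
    finally show "real p ^ l * (\<Sum>r=0..n - (w + 1) * l.
       real (Npl p l (n - (w + 1) * l) r) * real ((r + w) choose w) / real (2 * max r t + 1) ^ t)
      \<le> real (card (S w))" .
  qed
  also have "\<dots> = real (card (C2code p n l t \<xi> astar))" using cC by simp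
  finally show ?thesis .
qed

end
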